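(* In the setting described in the context, assume (A1), (A2) and (A3), and let $\gamma_0$ be sufficiently large. Let $\boldsymbol u_h\in W_h$ solve $A(\boldsymbol u_h,\boldsymbol v)=l(\boldsymbol v)$ for all $\boldsymbol v\in W_h$. Then $$\|\boldsymbol u-\boldsymbol u_h\|_a^2+\sum_{i=1}^2\gamma_0^{-1}\|S_i(\boldsymbol u)-S_i(\boldsymbol u_h)\|^2_{H^{-1/2}_h(\partial\Omega_{i,C})}$$ $$\lesssim\inf_{\boldsymbol v_h\in W_h}\Big((1+\gamma_0^{-1})\|\boldsymbol u-\boldsymbol v_h\|_a^2+\sum_{i=1}^2\Big(\gamma_0^{-1}\|\sigma_n(\boldsymbol u_i-\boldsymbol v_{h,i})\|^2_{H^{-1/2}_h(\partial\Omega_{i,C})}+\gamma_0\|[(\boldsymbol u-\boldsymbol v_h)_n]_i\|^2_{H^{1/2}_h(\partial\Omega_{i,C})}\Big)\Big).$$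
   Context: Let $d\in\{2,3\}$ and let $\Omega_1,\Omega_2\subset\mathbb{R}^d$ be bounded Lipschitz domains (elastic bodies). The boundary of each $\Omega_i$ is split into disjoint parts $\partial\Omega_{i,D}$ (Dirichlet, positive measure), $\partial\Omega_{i,N}$ (Neumann) and $\partial\Omega_{i,C}$ (potential contact zone); $\boldsymbol n_i$ is the exterior unit normal of $\Omega_i$. Let $\Omega_0$ be a $(d-1)$-dimensional curve/surface (the hybrid object) lying between $\Omega_1$ and $\Omega_2$, let $\boldsymbol p_0$ be the closest point map onto $\Omega_0$, let $\boldsymbol n_{i,0}(\boldsymbol z)$, $\boldsymbol z\in\partial\Omega_{i,C}$, be the unit normal of $\Omega_0$ at $\boldsymbol p_0(\boldsymbol z)$ pointing into $\Omega_i$, and let $\rho_{i,0}(\boldsymbol z)=\boldsymbol n_{i,0}(\boldsymbol z)\cdot(\boldsymbol z-\boldsymbol p_0(\boldsymbol z))$ be the gap. Stresses obey Hooke's law $\boldsymbol\sigma(\boldsymbol v)=\lambda_i\,\mathrm{tr}\,\boldsymbol\epsilon(\boldsymbol v)\boldsymbol I+2\mu_i\boldsymbol\epsilon(\boldsymbol v)$, $\boldsymbol\epsilon(\boldsymbol v)=\tfrac12(\nabla\boldsymbol v+\nabla\boldsymbol v^{T})$, with Lamé parameters $\lambda_i,\mu_i>0$ on $\Omega_i$; $\sigma_n(\boldsymbol v_i)=\boldsymbol n_i\cdot\boldsymbol\sigma(\boldsymbol v_i)\boldsymbol n_i$. For a triple $\boldsymbol v=(\boldsymbol v_0,\boldsymbol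 v_1,\boldsymbol v_2)$ of $\mathbb{R}^d$-valued fields on $\Omega_0,\Omega_1,\Omega_2$, the normal jump on $\partial\Omega_{i,C}$ is $[v_n]_i(\boldsymbol z)=\boldsymbol n_{i,0}(\boldsymbol z)\cdot\big(\boldsymbol v_i(\boldsymbol z)-\boldsymbol v_0(\boldsymbol p_0(\boldsymbol z))\big)$. Spaces: $V_i$ ($i=1,2$) is $H^1(\Omega_i)^d$ with zero trace on $\partial\Omega_{i,D}$; $V_0=H^{s_0}(\Omega_0)^d$ for some $s_0\ge0$ determined by the hybrid model; $W=V_0\oplus V_1\oplus V_2$. $V_{h,i}\subset V_i$, $i=0,1,2$, are conforming piecewise polynomial finite element spaces on quasi-uniform shape-regular meshes of $\Omega_i$ with mesh sizes $h_i$, and $W_h=V_{h,0}\oplus V_{h,1}\oplus V_{h,2}$. Fix $\gamma_0>0$. For each $i\in\{1,2\}$ a constraint type (equality or inequality) is fixed, and with the Nitsche normal stress $\Sigma_{n,i}(\boldsymbol v)=\sigma_n(\boldsymbol v_i)-\gamma_0h_i^{-1}([v_n]_i-\rho_{i,0})$ one sets $S_i(\boldsymbol v)=\Sigma_{n,i}(\boldsymbol v)$ (equality) or $S_i(\boldsymbol v)=\min(\Sigma_{n,i}(\boldsymbol v),0)$ pointwise (inequality); also $DS_i(\boldsymbol w)=\sigma_n(\boldsymbol w_i)-\gamma_0h_i^{-1}[w_n]_i$. For $s\in\mathbb{R}$, $\|v\|^2_{H^s_h(\partial\Omega_{i,C})}=h_i^{-2s}\|v\|^2_{L^2(\partial\Omega_{i,C})}$.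 Forms: $a_i(\boldsymbol v,\boldsymbol w)=(\boldsymbol\sigma(\boldsymbol v_i),\boldsymbol\epsilon(\boldsymbol w_i))_{\Omega_i}$ for $i=1,2$; $a_0$ is a given bilinear form on $V_0$ modelling the hybrid object (e.g. a plate or membrane). Two cases: Case 1 (auxiliary hybrid space): $I_a=\{1,2\}$, no $a_0$; Case 2 (physical hybrid model): $I_a=\{0,1,2\}$. Set $a(\boldsymbol v,\boldsymbol w)=\sum_{i\in I_a}a_i(\boldsymbol v_i,\boldsymbol w_i)$, $\|\boldsymbol v\|_a^2=a(\boldsymbol v,\boldsymbol v)$; $b_i(\boldsymbol v,\boldsymbol w)=\gamma_0^{-1}h_i(S_i(\boldsymbol v),DS_i(\boldsymbol w))_{L^2(\partial\Omega_{i,C})}$, $b=b_1+b_2$; $c_i(\boldsymbol v,\boldsymbol w)=\gamma_0^{-1}h_i(\sigma_n(\boldsymbol v_i),\sigma_n(\boldsymbol w_i))_{L^2(\partial\Omega_{i,C})}$, $c=c_1+c_2$, $\|\boldsymbol v\|_c^2=c(\boldsymbol v,\boldsymbol v)$; $A(\boldsymbol v,\boldsymbol w)=a(\boldsymbol v,\boldsymbol w)+b(\boldsymbol v,\boldsymbol w)-c(\boldsymbol v,\boldsymbol w)$. The load is $l(\boldsymbol v)=\sum_{i\in I_a}l_i(\boldsymbol v_i)$ with $l_i$ given bounded linear functionals on $V_i$. Assumptions: (A1) for each $i\in I_a$, $a_i$ is symmetric, coercive and continuous on $V_i$: $\|\boldsymbol v\|^2_{V_i}\lesssim a_i(\boldsymbol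 v,\boldsymbol v)$ and $a_i(\boldsymbol v,\boldsymbol w)\lesssim\|\boldsymbol v\|_{V_i}\|\boldsymbol w\|_{V_i}$. (A2) inverse bound: $\|\boldsymbol v\|_c^2\le C_1\gamma_0^{-1}\|\boldsymbol v\|_a^2$ for all $\boldsymbol v\in W_h$, with $C_1$ independent of $h_i$ and $\gamma_0$. (A3) the exact solution $\boldsymbol u=(\boldsymbol u_0,\boldsymbol u_1,\boldsymbol u_2)\in W$ is regular enough that $\sigma_n(\boldsymbol u_i)\in L^2(\partial\Omega_{i,C})$, $i=1,2$, and it satisfies the consistency relation $A(\boldsymbol u,\boldsymbol v)=l(\boldsymbol v)$ for all $\boldsymbol v\in W_h$. The notation $X\lesssim Y$ means $X\le CY$ with $C$ independent of the mesh sizes $h_i$ and of $\gamma_0$. *)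

theory Defs
  imports "HOL-Analysis.Analysis"
begin

text \<open>The global space W is an abstract real vector space of type 'w; the two
  potential contact zones are modelled by measure spaces M 1, M 2 (surface
  measure on the contact boundaries), and boundary quantities are real
  functions on the boundary points of type 'b.
  sn i v   : the normal stress sigma_n(v_i) on the i-th contact boundary,
  jmp i v  : the normal jump [v_n]_i,
  rho i    : the gap rho_{i,0}.\<close>

definition l2ip :: "'b measure \<Rightarrow> ('b \<Rightarrow> real) \<Rightarrow> ('b \<Rightarrow> real) \<Rightarrow> real" where
  "l2ip M f g = (\<integral>z. f z * g z \<partial>M)"

definition sqint :: "'b measure \<Rightarrow> ('b \<Rightarrow> real) \<Rightarrow> bool" where
  "sqint M f \<longleftrightarrow> f \<in> borel_measurable M \<and> integrable M (\<lambda>z. (f z)\<^sup>2)"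

definition Hh_norm2 :: "real \<Rightarrow> real \<Rightarrow> 'b measure \<Rightarrow> ('b \<Rightarrow> real) \<Rightarrow> real" where
  "Hh_norm2 s hi M f = hi powr (-2 * s) * l2ip M f f"

definition is_seminorm :: "('w::real_vector \<Rightarrow> real) \<Rightarrow> bool" where
  "is_seminorm N \<longleftrightarrow> (\<forall>v. 0 \<le> N v) \<and> (\<forall>v w. N (v + w) \<le> N v + N w)
      \<and> (\<forall>r v. N (r *\<^sub>R v) = \<bar>r\<bar> * N v)"

text \<open>index set I_a: Case 1 (auxiliary hybrid space) is {1,2},
  Case 2 (physical hybrid model) is {0,1,2}\<close>
definition Ia :: "bool \<Rightarrow> nat set" where
  "Ia case2 = (if case2 then {0,1,2} else {1,2})"

definition aform :: "nat set \<Rightarrow> (nat \<Rightarrow> 'w \<Rightarrow> 'w \<Rightarrow> real) \<Rightarrow> 'w \<Rightarrow> 'w \<Rightarrow> real" where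
  "aform I a v w = (\<Sum>i\<in>I. a i v w)"

definition NSig :: "(nat \<Rightarrow> 'w \<Rightarrow> 'b \<Rightarrow> real) \<Rightarrow> (nat \<Rightarrow> 'w \<Rightarrow> 'b \<Rightarrow> real)
    \<Rightarrow> (nat \<Rightarrow> 'b \<Rightarrow> real) \<Rightarrow> real \<Rightarrow> (nat \<Rightarrow> real) \<Rightarrow> nat \<Rightarrow> 'w \<Rightarrow> 'b \<Rightarrow> real" where
  "NSig sn jmp rho g0 h i v = (\<lambda>z. sn i v z - g0 / h i * (jmp i v z - rho i z))"

text \<open>S_i(v): equality constraint if ineq i is False, inequality constraint otherwise\<close>
definition Sfun :: "(nat \<Rightarrow> bool) \<Rightarrow> (nat \<Rightarrow> 'w \<Rightarrow> 'b \<Rightarrow> real) \<Rightarrow> (nat \<Rightarrow> 'w \<Rightarrow> 'b \<Rightarrow> real)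
    \<Rightarrow> (nat \<Rightarrow> 'b \<Rightarrow> real) \<Rightarrow> real \<Rightarrow> (nat \<Rightarrow> real) \<Rightarrow> nat \<Rightarrow> 'w \<Rightarrow> 'b \<Rightarrow> real" where
  "Sfun ineq sn jmp rho g0 h i v =
     (if ineq i then (\<lambda>z. min (NSig sn jmp rho g0 h i v z) 0) else NSig sn jmp rho g0 h i v)"

definition DSfun :: "(nat \<Rightarrow> 'w \<Rightarrow> 'b \<Rightarrow> real) \<Rightarrow> (nat \<Rightarrow> 'w \<Rightarrow> 'b \<Rightarrow> real)
    \<Rightarrow> real \<Rightarrow> (nat \<Rightarrow> real) \<Rightarrow> nat \<Rightarrow> 'w \<Rightarrow> 'b \<Rightarrow> real" where
  "DSfun sn jmp g0 h i w = (\<lambda>z. sn i w z - g0 / h i * jmp i w z)"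

definition bform :: "(nat \<Rightarrow> bool) \<Rightarrow> (nat \<Rightarrow> 'b measure) \<Rightarrow> (nat \<Rightarrow> 'w \<Rightarrow> 'b \<Rightarrow> real)
    \<Rightarrow> (nat \<Rightarrow> 'w \<Rightarrow> 'b \<Rightarrow> real) \<Rightarrow> (nat \<Rightarrow> 'b \<Rightarrow> real) \<Rightarrow> real \<Rightarrow> (nat \<Rightarrow> real)
    \<Rightarrow> 'w \<Rightarrow> 'w \<Rightarrow> real" where
  "bform ineq M sn jmp rho g0 h v w =
     (\<Sum>i\<in>{1,2}. h i / g0 * l2ip (M i) (Sfun ineq sn jmp rho g0 h i v) (DSfun sn jmp g0 h i w))"

definition cform :: "(nat \<Rightarrow> 'b measure) \<Rightarrow> (nat \<Rightarrow> 'w \<Rightarrow> 'b \<Rightarrow> real) \<Rightarrow> real \<Rightarrow> (nat \<Rightarrow> real)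
    \<Rightarrow> 'w \<Rightarrow> 'w \<Rightarrow> real" where
  "cform M sn g0 h v w = (\<Sum>i\<in>{1,2}. h i / g0 * l2ip (M i) (sn i v) (sn i w))"

definition Aform :: "nat set \<Rightarrow> (nat \<Rightarrow> 'w \<Rightarrow> 'w \<Rightarrow> real) \<Rightarrow> (nat \<Rightarrow> bool) \<Rightarrow> (nat \<Rightarrow> 'b measure)
    \<Rightarrow> (nat \<Rightarrow> 'w \<Rightarrow> 'b \<Rightarrow> real) \<Rightarrow> (nat \<Rightarrow> 'w \<Rightarrow> 'b \<Rightarrow> real) \<Rightarrow> (nat \<Rightarrow> 'b \<Rightarrow> real)
    \<Rightarrow> real \<Rightarrow> (nat \<Rightarrow> real) \<Rightarrow> 'w \<Rightarrow> 'w \<Rightarrow> real" where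
  "Aform I a ineq M sn jmp rho g0 h v w =
     aform I a v w + bform ineq M sn jmp rho g0 h v w - cform M sn g0 h v w"

end

theory Submission
  imports Defs
begin


lemma sqint_prod: assumes "sqint M f" "sqint M g" shows "integrable M (\<lambda>z. f z * g z)"
proof (rule Bochner_Integration.integrable_bound[where f="\<lambda>z. (f z)\<^sup>2 + (g z)\<^sup>2"])
  show "integrable M (\<lambda>z. (f z)\<^sup>2 + (g z)\<^sup>2)" using assms unfolding sqint_def by auto
  show "(\<lambda>z. f z * g z) \<in> borel_measurable M" using assms unfolding sqint_def by auto
  show "AE x in M. norm (f x * g x) \<le> norm ((f x)\<^sup>2 + (g x)\<^sup>2)"
  proof (rule AE_I2)
    fix x
    have "2 * \<bar>f x\<bar> * \<bar>g x\<bar> \<le> \<bar>f x\<bar>\<^sup>2 + \<bar>g x\<bar>\<^sup>2" by (rule sum_squares_bound)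
    then have "\<bar>f x\<bar> * \<bar>g x\<bar> \<le> (f x)\<^sup>2 + (g x)\<^sup>2"
      using mult_nonneg_nonneg[OF abs_ge_zero[of "f x"] abs_ge_zero[of "g x"]] by (simp only: power2_abs)
    then have "\<bar>f x * g x\<bar> \<le> (f x)\<^sup>2 + (g x)\<^sup>2" by (simp add: abs_mult)
    then show "norm (f x * g x) \<le> norm ((f x)\<^sup>2 + (g x)\<^sup>2)" by simp
  qed
qed

lemma sqint_add: assumes "sqint M f" "sqint M g" shows "sqint M (\<lambda>z. f z + g z)"
proof -
  have i: "integrable M (\<lambda>z. f z * g z)" using sqint_prod assms .
  have "(\<lambda>z. (f z + g z)\<^sup>2) = (\<lambda>z. (f z)\<^sup>2 + 2 * (f z * g z) + (g z)\<^sup>2)"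
    by (auto simp: power2_eq_square algebra_simps)
  moreover have "integrable M (\<lambda>z. (f z)\<^sup>2 + 2 * (f z * g z) + (g z)\<^sup>2)"
    using assms i unfolding sqint_def by auto
  ultimately show ?thesis using assms unfolding sqint_def by auto
qed

lemma sqint_scale: assumes "sqint M f" shows "sqint M (\<lambda>z. c * f z)"
proof -
  have "(\<lambda>z. (c * f z)\<^sup>2) = (\<lambda>z. c\<^sup>2 * (f z)\<^sup>2)" by (auto simp: power_mult_distrib)
  then show ?thesis using assms unfolding sqint_def by auto
qed

lemma sqint_diff: assumes "sqint M f" "sqint M g" shows "sqint M (\<lambda>z. f z - g z)"
  using sqint_add[OF assms(1) sqint_scale[OF assms(2), of "-1"]] by simp

lemma sqint_min0: assumes "sqint M f" shows "sqint M (\<lambda>z. min (f z) 0)"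
  unfolding sqint_def
proof
  show m: "(\<lambda>z. min (f z) 0) \<in> borel_measurable M" using assms unfolding sqint_def by auto
  show "integrable M (\<lambda>z. (min (f z) 0)\<^sup>2)"
  proof (rule Bochner_Integration.integrable_bound[where f="\<lambda>z. (f z)\<^sup>2"])
    show "integrable M (\<lambda>z. (f z)\<^sup>2)" using assms unfolding sqint_def by auto
    show "(\<lambda>z. (min (f z) 0)\<^sup>2) \<in> borel_measurable M" using m by auto
    show "AE x in M. norm ((min (f x) 0)\<^sup>2) \<le> norm ((f x)\<^sup>2)"
      by (rule AE_I2) (auto simp: min_def abs_le_square_iff)
  qed
qed

lemma minprop: "((min a 0 - min b 0) * (a - b) :: real) \<ge> (min a 0 - min b 0)\<^sup>2"
  by (cases "a \<le> 0"; cases "b \<le> 0") (auto simp: power2_eq_square min_def algebra_simps mult_nonneg_nonneg mult_nonpos_nonpos mult_nonpos_nonneg mult_nonneg_nonpos)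

lemma l2ip_nonneg: "0 \<le> l2ip M f f"
  unfolding l2ip_def by (simp add: integral_nonneg)

lemma arith_b: fixes a b c e f g :: real shows "a \<le> b \<Longrightarrow> 2 * c \<le> a + e \<Longrightarrow> e \<le> 2 * f + 2 * g \<Longrightarrow> a - 2 * f - 2 * g \<le> 2 * (b - c)"
  by argo

lemma key_b:
  fixes k :: real
  assumes "sqint M Su" "sqint M Sh" "sqint M Nu" "sqint M Nh" "sqint M sx" "sqint M jx"
    and mono: "\<forall>z. (Su z - Sh z) * (Nu z - Nh z) \<ge> (Su z - Sh z)\<^sup>2"
  shows "l2ip M (\<lambda>z. Su z - Sh z) (\<lambda>z. Su z - Sh z) - 2 * l2ip M sx sx - 2 * (k\<^sup>2 * l2ip M jx jx)
     \<le> 2 * (l2ip M Su (\<lambda>z. (Nu z - Nh z) - (sx z - k * jx z)) - l2ip M Sh (\<lambda>z. (Nu z - Nh z) - (sx z - k * jx z)))"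
proof -
  define D where "D = (\<lambda>z. (Nu z - Nh z) - (sx z - k * jx z))"
  have sD: "sqint M D" unfolding D_def
    by (intro sqint_diff sqint_scale assms)
  have sdS: "sqint M (\<lambda>z. Su z - Sh z)" by (intro sqint_diff assms)
  have i1: "integrable M (\<lambda>z. Su z * D z)" "integrable M (\<lambda>z. Sh z * D z)"
    using sqint_prod sD assms by blast+
  have i2: "integrable M (\<lambda>z. (Su z - Sh z) * (Su z - Sh z))" "integrable M (\<lambda>z. sx z * sx z)"
     "integrable M (\<lambda>z. jx z * jx z)"
    using sqint_prod sdS assms by blast+
  have "l2ip M (\<lambda>z. Su z - Sh z) (\<lambda>z. Su z - Sh z) - 2 * l2ip M sx sx - 2 * (k\<^sup>2 * l2ip M jx jx)
     = (\<integral>z. (Su z - Sh z) * (Su z - Sh z) - 2 * (sx z * sx z) - 2 * (k\<^sup>2 * (jx z * jx z)) \<partial>M)"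
    unfolding l2ip_def using i2 by simp
  also have "\<dots> \<le> (\<integral>z. 2 * (Su z * D z - Sh z * D z) \<partial>M)"
  proof (rule integral_mono)
    show "integrable M (\<lambda>z. (Su z - Sh z) * (Su z - Sh z) - 2 * (sx z * sx z) - 2 * (k\<^sup>2 * (jx z * jx z)))"
      using i2 by simp
    show "integrable M (\<lambda>z. 2 * (Su z * D z - Sh z * D z))" using i1 by simp
    fix z
    define d where "d = Su z - Sh z"
    define p where "p = Nu z - Nh z"
    define s where "s = sx z - k * jx z"
    have h1: "d * p \<ge> d\<^sup>2" using mono unfolding d_def p_def by auto
    have h2: "2 * (d * s) \<le> d\<^sup>2 + s\<^sup>2" using sum_squares_bound[of d s] by simp
    have e1: "s\<^sup>2 = (sx z)\<^sup>2 - 2 * sx z * (k*jx z) + (k*jx z)\<^sup>2" by (simp add: s_def power2_diff)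
    have e2: "(sx z + k*jx z)\<^sup>2 = (sx z)\<^sup>2 + 2 * sx z * (k*jx z) + (k*jx z)\<^sup>2" by (simp add: power2_sum)
    have e3: "(k*jx z)\<^sup>2 = k\<^sup>2*(jx z)\<^sup>2" by (simp add: power_mult_distrib)
    have h3: "s\<^sup>2 \<le> 2 * (sx z)\<^sup>2 + 2 * (k\<^sup>2 * (jx z)\<^sup>2)"
      using e1 e2 e3 zero_le_power2[of "sx z + k*jx z"] by linarith
    have "Su z * D z - Sh z * D z = d * p - d * s" unfolding D_def d_def p_def s_def by (simp add: algebra_simps)
    moreover have "(Su z - Sh z) * (Su z - Sh z) - 2 * (sx z * sx z) - 2 * (k\<^sup>2 * (jx z * jx z))
        = d\<^sup>2 - 2 * (sx z)\<^sup>2 - 2 * (k\<^sup>2 * (jx z)\<^sup>2)" unfolding d_def by (simp add: power2_eq_square)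
    moreover have "d\<^sup>2 - 2 * (sx z)\<^sup>2 - 2 * (k\<^sup>2 * (jx z)\<^sup>2) \<le> 2 * (d * p - d * s)"
      by (rule arith_b[OF h1 h2 h3])
    ultimately show "(Su z - Sh z) * (Su z - Sh z) - 2 * (sx z * sx z) - 2 * (k\<^sup>2 * (jx z * jx z))
        \<le> 2 * (Su z * D z - Sh z * D z)" by simp
  qed
  also have "\<dots> = 2 * (l2ip M Su D - l2ip M Sh D)" unfolding l2ip_def using i1 by simp
  finally show ?thesis unfolding D_def .
qed

lemma key_c:
  assumes "sqint M sU" "sqint M sUh" "sqint M sx" "sqint M sw"
    and eq: "\<forall>z. sU z - sUh z = sx z + sw z"
  shows "2 * (l2ip M sU sw - l2ip M sUh sw) \<le> l2ip M sx sx + 3 * l2ip M sw sw"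
proof -
  have i: "integrable M (\<lambda>z. sU z * sw z)" "integrable M (\<lambda>z. sUh z * sw z)"
     "integrable M (\<lambda>z. sx z * sx z)" "integrable M (\<lambda>z. sw z * sw z)"
    using sqint_prod assms by blast+
  have "2 * (l2ip M sU sw - l2ip M sUh sw) = (\<integral>z. 2 * (sU z * sw z - sUh z * sw z) \<partial>M)"
    unfolding l2ip_def using i by simp
  also have "\<dots> \<le> (\<integral>z. sx z * sx z + 3 * (sw z * sw z) \<partial>M)"
  proof (rule integral_mono)
    show "integrable M (\<lambda>z. 2 * (sU z * sw z - sUh z * sw z))" using i by simp
    show "integrable M (\<lambda>z. sx z * sx z + 3 * (sw z * sw z))" using i by simp
    fix z
    have "sU z * sw z - sUh z * sw z = (sx z + sw z) * sw z" using eq by (metis left_diff_distrib)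
    moreover have "2 * ((sx z + sw z) * sw z) \<le> sx z * sx z + 3 * (sw z * sw z)"
      using sum_squares_bound[of "sx z" "sw z"] by (simp add: power2_eq_square algebra_simps)
    ultimately show "2 * (sU z * sw z - sUh z * sw z) \<le> sx z * sx z + 3 * (sw z * sw z)" by simp
  qed
  also have "\<dots> = l2ip M sx sx + 3 * l2ip M sw sw" unfolding l2ip_def using i by simp
  finally show ?thesis .
qed

lemma bil:
  fixes B :: "'w::real_vector \<Rightarrow> 'w \<Rightarrow> real"
  assumes l1: "\<forall>v. linear (B v)" and l2: "\<forall>w. linear (\<lambda>v. B v w)" and sym: "\<forall>v w. B v w = B w v"
    and pos: "\<forall>v. 0 \<le> B v v"
  shows "4 * B v w \<le> B v v + 4 * B w w" "B (v - w) (v - w) \<le> 2 * B v v + 2 * B w w"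
proof -
  have L1: "B x (y - z) = B x y - B x z" "B x (c *\<^sub>R y) = c * B x y" "B x (y + z) = B x y + B x z" for x y z c
    using linear_diff[OF l1[rule_format, of x]] linear_scale[OF l1[rule_format, of x]]
      linear_add[OF l1[rule_format, of x]] by auto
  have L2: "B (y - z) x = B y x - B z x" "B (c *\<^sub>R y) x = c * B y x" "B (y + z) x = B y x + B z x" for x y z c
    using linear_diff[OF l2[rule_format, of x]] linear_scale[OF l2[rule_format, of x]]
      linear_add[OF l2[rule_format, of x]] by auto
  have "0 \<le> B (v - 2 *\<^sub>R w) (v - 2 *\<^sub>R w)" using pos by auto
  also have "\<dots> = B v v - 4 * B v w + 4 * B w w" by (simp add: L1 L2 sym[rule_format, of w v])
  finally show "4 * B v w \<le> B v v + 4 * B w w" by simp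
  have "0 \<le> B (v + w) (v + w)" using pos by auto
  also have "\<dots> = B v v + 2 * B v w + B w w" by (simp add: L1 L2 sym[rule_format, of w v])
  finally have "0 \<le> B v v + 2 * B v w + B w w" .
  moreover have "B (v - w) (v - w) = B v v - 2 * B v w + B w w" by (simp add: L1 L2 sym[rule_format, of w v])
  ultimately show "B (v - w) (v - w) \<le> 2 * B v v + 2 * B w w" by simp
qed



lemma Hh_m: "hi > 0 \<Longrightarrow> Hh_norm2 (-1/2) hi M f = hi * l2ip M f f"
  unfolding Hh_norm2_def by simp

lemma Hh_p: "hi > 0 \<Longrightarrow> Hh_norm2 (1/2) hi M f = l2ip M f f / hi"
  unfolding Hh_norm2_def by (simp add: powr_neg_one)

lemma final_arith:
  fixes ee xx bex bd cd t p q wc bww y :: real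
  assumes "0 = ee - bex + bd - cd" "4 * bex \<le> ee + 4 * xx" "bww \<le> 2 * ee + 2 * xx"
    "t - 2 * p - 2 * q \<le> 2 * bd" "2 * cd \<le> p + 3 * wc" "12 * wc \<le> bww" "0 \<le> xx" "0 \<le> y" "0 \<le> q"
  shows "ee + t \<le> 3 * (xx + y + p + q)"
  using assms by argo

theorem mainTheorem5:
  fixes a :: "nat \<Rightarrow> 'w::real_vector \<Rightarrow> 'w \<Rightarrow> real"
    and N :: "nat \<Rightarrow> 'w \<Rightarrow> real"
    and M :: "nat \<Rightarrow> 'b measure"
    and sn jmp :: "nat \<Rightarrow> 'w \<Rightarrow> 'b \<Rightarrow> real"
    and rho :: "nat \<Rightarrow> 'b \<Rightarrow> real"
    and l :: "'w \<Rightarrow> real"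
    and u :: 'w
    and C1 :: real
    and case2 :: bool
    and ineq :: "nat \<Rightarrow> bool"
  assumes A1: "\<forall>i\<in>Ia case2.
        (\<forall>v. linear (a i v)) \<and> (\<forall>w. linear (\<lambda>v. a i v w)) \<and> (\<forall>v w. a i v w = a i w v)
      \<and> is_seminorm (N i)
      \<and> (\<exists>c>0. \<forall>v. c * (N i v)\<^sup>2 \<le> a i v v)
      \<and> (\<exists>C. \<forall>v w. \<bar>a i v w\<bar> \<le> C * N i v * N i w)"
    and load: "linear l" "\<exists>CL. \<forall>v. \<bar>l v\<bar> \<le> CL * (\<Sum>i\<in>Ia case2. N i v)"
    and boundary: "\<forall>i\<in>{1,2}. finite_measure (M i) \<and> sqint (M i) (rho i)
        \<and> (\<forall>z. linear (\<lambda>v. sn i v z)) \<and> (\<forall>z. linear (\<lambda>v. jmp i v z))"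
    and A3_reg: "\<forall>i\<in>{1,2}. sqint (M i) (sn i u) \<and> sqint (M i) (jmp i u)"
    and C1_pos: "C1 > 0"
  shows "\<exists>gstar C. C > 0 \<and>
    (\<forall>g0 h Wh uh.
       g0 > 0 \<and> g0 \<ge> gstar \<and> h 1 > 0 \<and> h 2 > 0 \<and> subspace Wh
       \<and> (\<forall>v\<in>Wh. \<forall>i\<in>{1,2}. sqint (M i) (sn i v) \<and> sqint (M i) (jmp i v))
       \<comment> \<open>(A2) inverse bound\<close>
       \<and> (\<forall>v\<in>Wh. cform M sn g0 h v v \<le> C1 / g0 * aform (Ia case2) a v v)
       \<comment> \<open>(A3) consistency\<close>
       \<and> (\<forall>v\<in>Wh. Aform (Ia case2) a ineq M sn jmp rho g0 h u v = l v)
       \<comment> \<open>discrete solution\<close>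
       \<and> uh \<in> Wh \<and> (\<forall>v\<in>Wh. Aform (Ia case2) a ineq M sn jmp rho g0 h uh v = l v)
     \<longrightarrow>
       aform (Ia case2) a (u - uh) (u - uh)
         + (\<Sum>i\<in>{1,2}. 1 / g0 * Hh_norm2 (-1/2) (h i) (M i)
              (\<lambda>z. Sfun ineq sn jmp rho g0 h i u z - Sfun ineq sn jmp rho g0 h i uh z))
       \<le> C * (INF vh\<in>Wh.
              (1 + 1 / g0) * aform (Ia case2) a (u - vh) (u - vh)
              + (\<Sum>i\<in>{1,2}. 1 / g0 * Hh_norm2 (-1/2) (h i) (M i) (sn i (u - vh))
                             + g0 * Hh_norm2 (1/2) (h i) (M i) (jmp i (u - vh)))))"
proof -
  define I where "I = Ia case2"
  define B where "B = aform I a"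
  have Bv: "B v = (\<lambda>w. \<Sum>i\<in>I. a i v w)" for v unfolding B_def aform_def by (rule ext) simp
  have Bw: "(\<lambda>v. B v w) = (\<lambda>v. \<Sum>i\<in>I. a i v w)" for w unfolding B_def aform_def by (rule ext) simp
  have l1: "\<forall>v. linear (B v)" unfolding Bv using A1 I_def by (auto intro!: linear_compose_sum)
  have l2: "\<forall>w. linear (\<lambda>v. B v w)" unfolding Bw using A1 I_def by (auto intro!: linear_compose_sum)
  have sym: "\<forall>v w. B v w = B w v" unfolding B_def aform_def using A1 I_def by (auto intro!: sum.cong)
  have pos: "\<forall>v. 0 \<le> B v v"
  proof
    fix v
    have "0 \<le> a i v v" if "i \<in> I" for i
    proof -
      obtain c where c: "c > 0" "\<forall>v. c * (N i v)\<^sup>2 \<le> a i v v" using A1 \<open>i \<in> I\<close> I_def by blast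
      have "0 \<le> c * (N i v)\<^sup>2" using c by simp
      then show ?thesis using c by (meson order_trans)
    qed
    then show "0 \<le> B v v" unfolding B_def aform_def by (simp add: sum_nonneg)
  qed
  have B1: "B x (y - z) = B x y - B x z" for x y z
    using linear_diff[OF l1[rule_format, of x]] by auto
  have B2: "B (y - z) x = B y x - B z x" for x y z
    using linear_diff[OF l2[rule_format, of x]] by auto
  show ?thesis
  proof (rule exI[of _ "12 * C1"], rule exI[of _ "3::real"], rule conjI, simp, intro allI impI)
    fix g0 :: real and h :: "nat \<Rightarrow> real" and Wh :: "'w set" and uh
    assume H: "g0 > 0 \<and> g0 \<ge> 12 * C1 \<and> h 1 > 0 \<and> h 2 > 0 \<and> subspace Wh
       \<and> (\<forall>v\<in>Wh. \<forall>i\<in>{1,2}. sqint (M i) (sn i v) \<and> sqint (M i) (jmp i v))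
       \<and> (\<forall>v\<in>Wh. cform M sn g0 h v v \<le> C1 / g0 * aform (Ia case2) a v v)
       \<and> (\<forall>v\<in>Wh. Aform (Ia case2) a ineq M sn jmp rho g0 h u v = l v)
       \<and> uh \<in> Wh \<and> (\<forall>v\<in>Wh. Aform (Ia case2) a ineq M sn jmp rho g0 h uh v = l v)"
    then have g0: "g0 > 0" "g0 \<ge> 12 * C1" and hpos: "\<forall>i\<in>{1,2}. h i > 0" and sW: "subspace Wh"
      and sqW: "\<forall>v\<in>Wh. \<forall>i\<in>{1,2}. sqint (M i) (sn i v) \<and> sqint (M i) (jmp i v)"
      and A2: "\<forall>v\<in>Wh. cform M sn g0 h v v \<le> C1 / g0 * B v v"
      and cons: "\<forall>v\<in>Wh. Aform I a ineq M sn jmp rho g0 h u v = l v"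
      and uhW: "uh \<in> Wh" and disc: "\<forall>v\<in>Wh. Aform I a ineq M sn jmp rho g0 h uh v = l v"
      unfolding B_def I_def by auto
    define S where "S = Sfun ineq sn jmp rho g0 h"
    define T where "T = (\<lambda>i. 1 / g0 * Hh_norm2 (-1/2) (h i) (M i) (\<lambda>z. S i u z - S i uh z))"
    define F where "F = (\<lambda>vh. (1 + 1 / g0) * B (u - vh) (u - vh)
              + (\<Sum>i\<in>{1,2}. 1 / g0 * Hh_norm2 (-1/2) (h i) (M i) (sn i (u - vh))
                             + g0 * Hh_norm2 (1/2) (h i) (M i) (jmp i (u - vh))))"
    have main: "B (u - uh) (u - uh) + (T 1 + T 2) \<le> 3 * F vh" if vhW: "vh \<in> Wh" for vh
    proof -
      define e where "e = u - uh"
      define x where "x = u - vh"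
      define w where "w = vh - uh"
      have wW: "w \<in> Wh" unfolding w_def using sW vhW uhW by (simp add: subspace_diff)
      have wex: "w = e - x" unfolding w_def e_def x_def by simp
      define P where "P = (\<lambda>i. 1 / g0 * Hh_norm2 (-1/2) (h i) (M i) (sn i x))"
      define Q where "Q = (\<lambda>i. g0 * Hh_norm2 (1/2) (h i) (M i) (jmp i x))"
      define Wc where "Wc = (\<lambda>i. h i / g0 * l2ip (M i) (sn i w) (sn i w))"
      define DS where "DS = DSfun sn jmp g0 h"
      define bd where "bd = (\<lambda>i. h i / g0 * (l2ip (M i) (S i u) (DS i w) - l2ip (M i) (S i uh) (DS i w)))"
      define cd where "cd = (\<lambda>i. h i / g0 * (l2ip (M i) (sn i u) (sn i w) - l2ip (M i) (sn i uh) (sn i w)))"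
      have per: "T i - 2 * P i - 2 * Q i \<le> 2 * bd i \<and> 2 * cd i \<le> P i + 3 * Wc i \<and> 0 \<le> Q i \<and> 0 \<le> P i"
        if i: "i \<in> {1,2}" for i
      proof -
        have hi: "h i > 0" using hpos i by auto
        have bnd: "sqint (M i) (rho i)" "\<forall>z. linear (\<lambda>v. sn i v z)" "\<forall>z. linear (\<lambda>v. jmp i v z)"
          using boundary i by auto
        have snd: "sn i (v1 - v2) = (\<lambda>z. sn i v1 z - sn i v2 z)" for v1 v2
          using linear_diff[OF bnd(2)[rule_format]] by (intro ext) auto
        have jd: "jmp i (v1 - v2) = (\<lambda>z. jmp i v1 z - jmp i v2 z)" for v1 v2
          using linear_diff[OF bnd(3)[rule_format]] by (intro ext) auto
        have su: "sqint (M i) (sn i u)" "sqint (M i) (jmp i u)" using A3_reg i by auto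
        have suh: "sqint (M i) (sn i uh)" "sqint (M i) (jmp i uh)" using sqW uhW i by auto
        have svh: "sqint (M i) (sn i vh)" "sqint (M i) (jmp i vh)" using sqW vhW i by auto
        have sw: "sqint (M i) (sn i w)" using sqW wW i by auto
        have sx: "sqint (M i) (sn i x)" "sqint (M i) (jmp i x)" unfolding x_def snd jd
          using su svh by (auto intro: sqint_diff)
        define k where "k = g0 / h i"
        define Nu where "Nu = NSig sn jmp rho g0 h i u"
        define Nh where "Nh = NSig sn jmp rho g0 h i uh"
        have sNu: "sqint (M i) Nu" unfolding Nu_def NSig_def
          by (intro sqint_diff sqint_scale su bnd(1))
        have sNh: "sqint (M i) Nh" unfolding Nh_def NSig_def
          by (intro sqint_diff sqint_scale suh bnd(1))
        have Sdef: "S i v = (if ineq i then (\<lambda>z. min (NSig sn jmp rho g0 h i v z) 0) else NSig sn jmp rho g0 h i v)" for v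
          unfolding S_def Sfun_def by simp
        have sSu: "sqint (M i) (S i u)" using sNu unfolding Sdef Nu_def by (auto intro: sqint_min0)
        have sSh: "sqint (M i) (S i uh)" using sNh unfolding Sdef Nh_def by (auto intro: sqint_min0)
        have mono: "\<forall>z. (S i u z - S i uh z) * (Nu z - Nh z) \<ge> (S i u z - S i uh z)\<^sup>2"
        proof
          fix z
          show "(S i u z - S i uh z) * (Nu z - Nh z) \<ge> (S i u z - S i uh z)\<^sup>2"
          proof (cases "ineq i")
            case True
            then show ?thesis unfolding Sdef Nu_def Nh_def using minprop by simp
          next
            case False
            then show ?thesis unfolding Sdef Nu_def Nh_def by (simp add: power2_eq_square)
          qed
        qed
        have Deq: "DS i w = (\<lambda>z. (Nu z - Nh z) - (sn i x z - k * jmp i x z))"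
          unfolding DS_def DSfun_def Nu_def Nh_def NSig_def k_def w_def x_def snd jd
          by (rule ext) (simp add: algebra_simps)
        have kb: "l2ip (M i) (\<lambda>z. S i u z - S i uh z) (\<lambda>z. S i u z - S i uh z) - 2 * l2ip (M i) (sn i x) (sn i x)
             - 2 * (k\<^sup>2 * l2ip (M i) (jmp i x) (jmp i x))
           \<le> 2 * (l2ip (M i) (S i u) (DS i w) - l2ip (M i) (S i uh) (DS i w))"
          unfolding Deq by (rule key_b[OF sSu sSh sNu sNh sx mono])
        have kc: "2 * (l2ip (M i) (sn i u) (sn i w) - l2ip (M i) (sn i uh) (sn i w))
            \<le> l2ip (M i) (sn i x) (sn i x) + 3 * l2ip (M i) (sn i w) (sn i w)"
          by (rule key_c[OF su(1) suh(1) sx(1) sw]) (simp add: x_def w_def snd)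
        have Ti: "T i = h i / g0 * l2ip (M i) (\<lambda>z. S i u z - S i uh z) (\<lambda>z. S i u z - S i uh z)"
          unfolding T_def Hh_m[OF hi] by simp
        have Pi: "P i = h i / g0 * l2ip (M i) (sn i x) (sn i x)"
          unfolding P_def Hh_m[OF hi] by simp
        have Qi: "Q i = h i / g0 * (k\<^sup>2 * l2ip (M i) (jmp i x) (jmp i x))"
          unfolding Q_def k_def Hh_p[OF hi] using hi g0 by (simp add: power2_eq_square field_simps)
        have hg: "h i / g0 > 0" using hi g0 by simp
        have "T i - 2 * P i - 2 * Q i = h i / g0 * (l2ip (M i) (\<lambda>z. S i u z - S i uh z) (\<lambda>z. S i u z - S i uh z) - 2 * l2ip (M i) (sn i x) (sn i x)
             - 2 * (k\<^sup>2 * l2ip (M i) (jmp i x) (jmp i x)))"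
          unfolding Ti Pi Qi by (simp add: algebra_simps)
        also have "\<dots> \<le> h i / g0 * (2 * (l2ip (M i) (S i u) (DS i w) - l2ip (M i) (S i uh) (DS i w)))"
          using kb hg by (intro mult_left_mono) auto
        also have "\<dots> = 2 * bd i" unfolding bd_def by simp
        finally have r1: "T i - 2 * P i - 2 * Q i \<le> 2 * bd i" .
        have "2 * cd i = h i / g0 * (2 * (l2ip (M i) (sn i u) (sn i w) - l2ip (M i) (sn i uh) (sn i w)))"
          unfolding cd_def by simp
        also have "\<dots> \<le> h i / g0 * (l2ip (M i) (sn i x) (sn i x) + 3 * l2ip (M i) (sn i w) (sn i w))"
          using kc hg by (intro mult_left_mono) auto
        also have "\<dots> = P i + 3 * Wc i" unfolding Pi Wc_def by (simp add: algebra_simps)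
        finally have r2: "2 * cd i \<le> P i + 3 * Wc i" .
        have r3: "0 \<le> Q i" unfolding Qi using hg l2ip_nonneg[of "M i" "jmp i x"]
          by (intro mult_nonneg_nonneg) auto
        have r4: "0 \<le> P i" unfolding Pi using hg l2ip_nonneg[of "M i" "sn i x"]
          by (intro mult_nonneg_nonneg) auto
        show ?thesis using r1 r2 r3 r4 by simp
      qed
      have p1: "T 1 - 2 * P 1 - 2 * Q 1 \<le> 2 * bd 1" "2 * cd 1 \<le> P 1 + 3 * Wc 1" "0 \<le> Q 1" "0 \<le> P 1"
        using per[of 1] by auto
      have p2: "T 2 - 2 * P 2 - 2 * Q 2 \<le> 2 * bd 2" "2 * cd 2 \<le> P 2 + 3 * Wc 2" "0 \<le> Q 2" "0 \<le> P 2"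
        using per[of 2] by auto
      have "Aform I a ineq M sn jmp rho g0 h u w = Aform I a ineq M sn jmp rho g0 h uh w"
        using cons disc wW by auto
      then have c0: "B u w + bform ineq M sn jmp rho g0 h u w - cform M sn g0 h u w
          = B uh w + bform ineq M sn jmp rho g0 h uh w - cform M sn g0 h uh w"
        unfolding Aform_def B_def .
      have bf: "bform ineq M sn jmp rho g0 h u w - bform ineq M sn jmp rho g0 h uh w = bd 1 + bd 2"
        unfolding bform_def bd_def S_def DS_def by (simp add: algebra_simps)
      have cf: "cform M sn g0 h u w - cform M sn g0 h uh w = cd 1 + cd 2"
        unfolding cform_def cd_def by (simp add: algebra_simps)
      have cw: "cform M sn g0 h w w = Wc 1 + Wc 2"
        unfolding cform_def Wc_def by simp
      have Ba: "B u w - B uh w = B e e - B e x"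
      proof -
        have "B u w - B uh w = B e w" by (simp only: e_def B2)
        also have "\<dots> = B e e - B e x" by (simp only: wex B1)
        finally show ?thesis .
      qed
      have b1: "4 * B e x \<le> B e e + 4 * B x x" by (rule bil(1)[OF l1 l2 sym pos])
      have b2: "B w w \<le> 2 * B e e + 2 * B x x" unfolding wex by (rule bil(2)[OF l1 l2 sym pos])
      have A2w: "Wc 1 + Wc 2 \<le> C1 / g0 * B w w" using A2 wW cw by auto
      have c1g: "12 * (C1 / g0) \<le> 1" using g0 by (simp add: field_simps)
      have "12 * (C1 / g0 * B w w) \<le> 1 * B w w"
        using mult_right_mono[OF c1g pos[rule_format, of w]] by (simp add: algebra_simps)
      then have A2w': "12 * (Wc 1 + Wc 2) \<le> B w w" using A2w by argo
      have y0: "0 \<le> B x x / g0" using pos g0 by simp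
      have Fv: "F vh = B x x + B x x / g0 + (P 1 + P 2) + (Q 1 + Q 2)"
        unfolding F_def P_def Q_def x_def by (simp add: algebra_simps)
      have "B e e + (T 1 + T 2) \<le> 3 * (B x x + B x x / g0 + (P 1 + P 2) + (Q 1 + Q 2))"
        apply (rule final_arith[where bex="B e x" and bd="bd 1 + bd 2" and cd="cd 1 + cd 2" and wc="Wc 1 + Wc 2" and bww="B w w"])
        using c0 bf cf Ba b1 b2 A2w' y0 p1 p2 pos[rule_format, of x] by argo+
      then show ?thesis unfolding Fv e_def .
    qed
    have ne: "Wh \<noteq> {}" using uhW by auto
    have "(B (u - uh) (u - uh) + (T 1 + T 2)) / 3 \<le> (INF vh\<in>Wh. F vh)"
    proof (rule cINF_greatest[OF ne])
      fix vh assume "vh \<in> Wh"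
      from main[OF this] show "(B (u - uh) (u - uh) + (T 1 + T 2)) / 3 \<le> F vh" by simp
    qed
    then have "B (u - uh) (u - uh) + (T 1 + T 2) \<le> 3 * (INF vh\<in>Wh. F vh)" by simp
    then show "aform (Ia case2) a (u - uh) (u - uh)
         + (\<Sum>i\<in>{1,2}. 1 / g0 * Hh_norm2 (-1/2) (h i) (M i)
              (\<lambda>z. Sfun ineq sn jmp rho g0 h i u z - Sfun ineq sn jmp rho g0 h i uh z))
       \<le> 3 * (INF vh\<in>Wh.
              (1 + 1 / g0) * aform (Ia case2) a (u - vh) (u - vh)
              + (\<Sum>i\<in>{1,2}. 1 / g0 * Hh_norm2 (-1/2) (h i) (M i) (sn i (u - vh))
                             + g0 * Hh_norm2 (1/2) (h i) (M i) (jmp i (u - vh))))"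
      unfolding B_def I_def T_def F_def S_def by simp
  qed
qed

end
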